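(* Let $a,b,c\in[0,1]$, each different from $\frac12$, and define $f=f_{a,b,c}:[0,1]\to[0,1]$ by $$f(x)=\begin{cases}(1-2a)x^2+2ax, & x\in[0,\frac13],\\ (1-2b)x^2+2bx, & x\in(\frac13,\frac23),\\ (1-2c)x^2+2cx, & x\in[\frac23,1].\end{cases}$$ Let $f^n$ denote the $n$-fold composition and $x^{(n)}=f^n(x^{(0)})$. Then: 1. The set of fixed points of $f$ is $\{0,1\}$. 2. If $a,b,c<\frac12$, then $\lim_{n\to\infty}x^{(n)}=0$ for all $x^{(0)}\in[0,1)$. 3. If $a<\frac12$, $b<\frac12$, $c>\frac12$, then $\lim_{n\to\infty}x^{(n)}=0$ if $x^{(0)}\in[0,\frac23)$ and $\lim_{n\to\infty}x^{(n)}=1$ if $x^{(0)}\in[\frac23,1]$. 4. If $a<\frac12$, $b>\frac12$, $c<\frac12$, then $\lim_{n\to\infty}x^{(n)}=0$ for all $x^{(0)}\in[0,\frac13]$. 5. If $a<\frac12$, $b>\frac12$, $c<\frac12$, let $A_1=[0,\frac13]$, $A_2=(\frac13,\frac49(1+c))\cup(\frac49(1+b),1)$, $A_3=[\frac49(1+c),\frac49(1+b)]$. Then (i) $\lim_{n\to\infty}x^{(n)}=0$ for every $x^{(0)}\in A_1$; (ii) for every $x_0\in A_2$ there exists $n_0=n_0(x_0)\in\mathbb N$ such that $f^n(x_0)\in A_3$ for all $n>n_0$; (iii) $f(A_3)\subset A_3$. 6. If $a<\frac12$, $b>\frac12$, $c>\frac12$, then $\lim_{n\to\infty}x^{(n)}=0$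 if $x^{(0)}\in[0,\frac13]$ and $\lim_{n\to\infty}x^{(n)}=1$ if $x^{(0)}\in(\frac13,1]$. 7. If $a>\frac12$, $b<\frac12$, $c<\frac12$, let $B_1=(0,\frac19(1+4b))\cup(\frac19(1+4a),1)$ and $B_2=[\frac19(1+4b),\frac19(1+4a)]$. Then (i) for every $x_0\in B_1$ there exists $n_0=n_0(x_0)\in\mathbb N$ such that $f^n(x_0)\in B_2$ for all $n>n_0$; (ii) $f(B_2)\subset B_2$. 8. If $a>\frac12$, $b<\frac12$, $c>\frac12$, let $C_1=(0,\frac19(1+4b))\cup(\frac19(1+4a),\frac23)$, $C_2=[\frac19(1+4b),\frac19(1+4a)]$, $C_3=[\frac23,1]$. Then (i) for every $x_0\in C_1$ there exists $n_0=n_0(x_0)\in\mathbb N$ such that $f^n(x_0)\in C_2$ for all $n>n_0$; (ii) $f(C_2)\subset C_2$; (iii) $\lim_{n\to\infty}x^{(n)}=1$ for every $x^{(0)}\in C_3$. 9. If $a,b,c>\frac12$, then $\lim_{n\to\infty}x^{(n)}=1$ for all $x^{(0)}\in(0,1]$.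
   Context: Here all parameters lie in $[0,1]$, so e.g. "$a<\frac12$" means $0\le a<\frac12$ and "$a>\frac12$" means $\frac12<a\le1$. The map is the reduction to $[0,1]$ (via $y=1-x$) of the quadratic stochastic operator $x'=x^2+2p(x)xy$, $y'=2(1-p(x))xy+y^2$ with $p(x)=a$ for $x\le\frac13$, $b$ for $\frac13<x<\frac23$, $c$ for $x\ge\frac23$. *)

theory Defs
  imports "HOL-Analysis.Analysis"
begin

definition fabc :: "real \<Rightarrow> real \<Rightarrow> real \<Rightarrow> real \<Rightarrow> real" where
  "fabc a b c x =
     (if x \<le> 1/3 then (1 - 2*a) * x^2 + 2*a*x
      else if x < 2/3 then (1 - 2*b) * x^2 + 2*b*x
      else (1 - 2*c) * x^2 + 2*c*x)"

end

theory Submission imports Defs begin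
definition g :: "real \<Rightarrow> real \<Rightarrow> real" where "g p x = (1-2*p)*x^2 + 2*p*x"

lemma g_id: "g p x = x + (2*p-1)*x*(1-x)"
  unfolding g_def by (simp add: power2_eq_square algebra_simps)

lemma fabc_g: "fabc a b c x = g (if x \<le> 1/3 then a else if x < 2/3 then b else c) x"
  unfolding fabc_def g_def by auto

lemma g_mono: assumes "0 \<le> p" "p \<le> 1" "0 \<le> x" "x \<le> y" "y \<le> 1" shows "g p x \<le> g p y"
proof -
  have "g p y - g p x = (y-x)*((1-2*p)*(x+y)+2*p)" unfolding g_def by (simp add: power2_eq_square algebra_simps)
  moreover have "(1-2*p)*(x+y)+2*p \<ge> 0"
  proof (cases "p \<le> 1/2")
    case True then show ?thesis using assms by (simp add: add_nonneg_nonneg)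
  next
    case False
    have "(2*p-1)*(x+y) \<le> (2*p-1)*2" using False assms by (intro mult_left_mono) auto
    then show ?thesis using assms by (simp add: algebra_simps)
  qed
  ultimately show ?thesis using assms mult_nonneg_nonneg[of "y-x" "(1-2*p)*(x+y)+2*p"] by linarith
qed

lemma g_23: "g p (2/3) = 4/9*(1+p)" unfolding g_def by (simp add: power2_eq_square field_simps)
lemma g_13: "g p (1/3) = 1/9*(1+4*p)" unfolding g_def by (simp add: power2_eq_square field_simps)

lemma g_up: assumes "1/2 \<le> q" "q \<le> p" "0 \<le> m" "m \<le> x" "0 \<le> k" "k \<le> 1-x"
  shows "x + (2*q-1)*m*k \<le> g p x"
proof -
  have "m*k \<le> x*(1-x)" using assms by (intro mult_mono) auto
  then have "(2*q-1)*(m*k) \<le> (2*p-1)*(x*(1-x))" using assms by (intro mult_mono) (auto intro: mult_nonneg_nonneg)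
  then show ?thesis unfolding g_id by (simp add: algebra_simps)
qed

lemma g_down: assumes "p \<le> q" "q \<le> 1/2" "0 \<le> m" "m \<le> x" "0 \<le> k" "k \<le> 1-x"
  shows "g p x \<le> x - (1-2*q)*m*k"
proof -
  have "m*k \<le> x*(1-x)" using assms by (intro mult_mono) auto
  then have "(1-2*q)*(m*k) \<le> (1-2*p)*(x*(1-x))" using assms
    by (intro mult_mono) (auto intro: mult_nonneg_nonneg)
  then show ?thesis unfolding g_id by (simp add: algebra_simps)
qed

lemma geo0:
  fixes x :: "nat \<Rightarrow> real"
  assumes "\<And>n. 0 \<le> x n" "\<And>n. x (Suc n) \<le> r * x n" "0 \<le> r" "r < 1"
  shows "x \<longlonglongrightarrow> 0"
proof -
  have b: "x n \<le> r^n * x 0" for n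
  proof (induction n)
    case 0 show ?case by simp
  next
    case (Suc n)
    have "x (Suc n) \<le> r * x n" by (rule assms(2))
    also have "\<dots> \<le> r * (r^n * x 0)" using Suc assms(3) by (rule mult_left_mono)
    finally show ?case by (simp add: mult.assoc)
  qed
  have "(\<lambda>n. r^n * x 0) \<longlonglongrightarrow> 0 * x 0"
    using assms by (intro tendsto_mult LIMSEQ_power_zero tendsto_const) auto
  then have "(\<lambda>n. r^n * x 0) \<longlonglongrightarrow> 0" by simp
  then show ?thesis by (rule Lim_null_comparison[rotated]) (use b assms(1) in auto)
qed

lemma conv0:
  fixes f :: "real \<Rightarrow> real"
  assumes h: "\<And>x. 0 \<le> x \<Longrightarrow> x \<le> x0 \<Longrightarrow> \<exists>p. f x = g p x \<and> 0 \<le> p \<and> p \<le> q"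
    and q: "0 \<le> q" "q < 1/2" and x0: "0 \<le> x0" "x0 < 1"
  shows "(\<lambda>n. (f^^n) x0) \<longlonglongrightarrow> 0"
proof -
  define d where "d = (1-2*q)*(1-x0)"
  have d: "0 < d" "d \<le> 1" unfolding d_def using q x0 by (auto intro: mult_le_one)
  have st: "0 \<le> f x \<and> f x \<le> (1-d)*x" if xx: "0 \<le> x" "x \<le> x0" for x
  proof -
    obtain p where p: "f x = g p x" "0 \<le> p" "p \<le> q" using h xx by blast
    have "g p x \<le> x - (1-2*q)*x*(1-x0)" using p q xx x0 by (intro g_down) auto
    moreover have "(1-2*p)*(1-x) \<le> 1" using p q xx x0 by (intro mult_le_one) auto
    then have "(1-2*p)*(1-x)*x \<le> x" using xx mult_right_mono[of "(1-2*p)*(1-x)" 1 x] by simp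
    then have "0 \<le> g p x" unfolding g_id by (simp add: algebra_simps)
    ultimately show ?thesis using p unfolding d_def by (simp add: algebra_simps)
  qed
  have inv: "0 \<le> (f^^n) x0 \<and> (f^^n) x0 \<le> x0" for n
  proof (induction n)
    case 0 then show ?case using x0 by simp
  next
    case (Suc n)
    then have "0 \<le> f ((f^^n) x0) \<and> f ((f^^n) x0) \<le> (1-d)*(f^^n) x0" using st by blast
    moreover have "(1-d)*(f^^n) x0 \<le> (f^^n) x0" using Suc d
      by (simp add: algebra_simps mult_nonneg_nonneg)
    ultimately show ?case using Suc by auto
  qed
  show ?thesis
    by (rule geo0[of _ "1-d"]) (use inv st d in auto)
qed

lemma conv1:
  fixes f :: "real \<Rightarrow> real"
  assumes h: "\<And>x. x0 \<le> x \<Longrightarrow> x \<le> 1 \<Longrightarrow> \<exists>p. f x = g p x \<and> q \<le> p \<and> p \<le> 1"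
    and q: "1/2 < q" and x0: "0 < x0" "x0 \<le> 1"
  shows "(\<lambda>n. (f^^n) x0) \<longlonglongrightarrow> 1"
proof -
  define d where "d = (2*q-1)*x0"
  have d: "0 < d" "d \<le> 1" unfolding d_def using q x0 h[of x0] by (auto intro: mult_le_one)
  have st: "f x \<le> 1 \<and> 1 - f x \<le> (1-d)*(1-x)" if xx: "x0 \<le> x" "x \<le> 1" for x
  proof -
    obtain p where p: "f x = g p x" "q \<le> p" "p \<le> 1" using h xx by blast
    have "x + (2*q-1)*x0*(1-x) \<le> g p x" using p q xx x0 by (intro g_up) auto
    moreover have "(2*p-1)*x \<le> 1" using p q xx x0 by (intro mult_le_one) auto
    then have "(2*p-1)*x*(1-x) \<le> (1-x)" using xx mult_right_mono[of "(2*p-1)*x" 1 "1-x"] by simp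
    then have "g p x \<le> 1" unfolding g_id by (simp add: algebra_simps)
    ultimately show ?thesis using p unfolding d_def by (simp add: algebra_simps)
  qed
  have inv: "x0 \<le> (f^^n) x0 \<and> (f^^n) x0 \<le> 1" for n
  proof (induction n)
    case 0 then show ?case using x0 by simp
  next
    case (Suc n)
    then have "f ((f^^n) x0) \<le> 1 \<and> 1 - f ((f^^n) x0) \<le> (1-d)*(1 - (f^^n) x0)" using st by blast
    moreover have "(1-d)*(1-(f^^n) x0) \<le> 1 - (f^^n) x0" using Suc d
      by (simp add: algebra_simps mult_nonneg_nonneg)
    ultimately show ?case using Suc by auto
  qed
  have "(\<lambda>n. 1 - (f^^n) x0) \<longlonglongrightarrow> 0"
    by (rule geo0[of _ "1-d"]) (use inv st d in auto)
  from tendsto_diff[OF tendsto_const this, of 1] show ?thesis by simp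
qed

lemma escape:
  fixes f :: "real \<Rightarrow> real" and \<phi> :: "real \<Rightarrow> real"
  assumes "\<And>x. x \<in> S \<Longrightarrow> f x \<in> S \<union> T" "\<And>x. x \<in> S \<Longrightarrow> \<phi> x + e \<le> \<phi> (f x)"
    "\<And>x. x \<in> S \<Longrightarrow> \<phi> x \<le> M" "0 < e" "x0 \<in> S" "f ` T \<subseteq> T"
  shows "\<exists>n0. \<forall>n>n0. (f^^n) x0 \<in> T"
proof -
  have "\<exists>m. (f^^m) x0 \<in> T"
  proof (rule ccontr)
    assume nT: "\<not> (\<exists>m. (f^^m) x0 \<in> T)"
    have I: "(f^^n) x0 \<in> S \<and> \<phi> x0 + of_nat n * e \<le> \<phi> ((f^^n) x0)" for n
    proof (induction n)
      case 0 show ?case using assms(5) by simp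
    next
      case (Suc n)
      have "(f^^Suc n) x0 \<notin> T" using nT by blast
      then have "f ((f^^n) x0) \<in> S" using assms(1)[of "(f^^n) x0"] Suc by auto
      moreover have "\<phi> ((f^^n) x0) + e \<le> \<phi> (f ((f^^n) x0))" using assms(2) Suc by blast
      ultimately show ?case using Suc by (auto simp: algebra_simps)
    qed
    obtain n where n: "M - \<phi> x0 < of_nat n * e" using ex_less_of_nat_mult[OF assms(4)] by blast
    show False using I[of n] assms(3)[of "(f^^n) x0"] n by linarith
  qed
  then obtain m where m: "(f^^m) x0 \<in> T" by blast
  have k: "(f^^(k+m)) x0 \<in> T" for k
    by (induction k) (use m assms(6) in auto)
  show ?thesis
  proof (intro exI allI impI)
    fix n assume "m < n"
    then have "n = (n-m)+m" by simp
    then show "(f^^n) x0 \<in> T" using k by metis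
  qed
qed
lemma g_ge: "1/2 \<le> p \<Longrightarrow> 0 \<le> x \<Longrightarrow> x \<le> 1 \<Longrightarrow> x \<le> g p x"
  using g_up[of "1/2" p 0 x 0] by simp
lemma g_le: "p \<le> 1/2 \<Longrightarrow> 0 \<le> x \<Longrightarrow> x \<le> 1 \<Longrightarrow> g p x \<le> x"
  using g_down[of p "1/2" 0 x 0] by simp

lemma fix_pts:
  assumes "a \<noteq> 1/2" "b \<noteq> 1/2" "c \<noteq> 1/2"
  shows "{x \<in> {0..1}. fabc a b c x = x} = {0, 1}"
proof
  show "{0,1} \<subseteq> {x \<in> {0..1}. fabc a b c x = x}" by (auto simp: fabc_def)
  show "{x \<in> {0..1}. fabc a b c x = x} \<subseteq> {0,1}"
  proof
    fix x assume x: "x \<in> {x \<in> {0..1}. fabc a b c x = x}"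
    define p where "p = (if x \<le> 1/3 then a else if x < 2/3 then b else c)"
    have pn: "2*p-1 \<noteq> 0" using assms p_def by auto
    have "(2*p-1)*(x*(1-x)) = 0" using x fabc_g[of a b c x] g_id[of p x] unfolding p_def[symmetric]
      by (simp add: algebra_simps)
    then show "x \<in> {0,1}" using pn by auto
  qed
qed

lemma part2:
  assumes "0 \<le> a" "0 \<le> b" "0 \<le> c" "a < 1/2" "b < 1/2" "c < 1/2" "x0 \<in> {0..<1}"
  shows "(\<lambda>n. (fabc a b c ^^ n) x0) \<longlonglongrightarrow> 0"
  apply (rule conv0[where q="max a (max b c)"])
  subgoal for x by (rule exI[of _ "if x \<le> 1/3 then a else if x < 2/3 then b else c"]) (use assms in \<open>auto simp: fabc_g\<close>)
  using assms by auto

lemma part3a: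
  assumes "0 \<le> a" "0 \<le> b" "a < 1/2" "b < 1/2" "x0 \<in> {0..<2/3}"
  shows "(\<lambda>n. (fabc a b c ^^ n) x0) \<longlonglongrightarrow> 0"
  apply (rule conv0[where q="max a b"])
  subgoal for x by (rule exI[of _ "if x \<le> 1/3 then a else b"]) (use assms in \<open>auto simp: fabc_g\<close>)
  using assms by auto

lemma part4:
  assumes "0 \<le> a" "a < 1/2" "x0 \<in> {0..1/3}"
  shows "(\<lambda>n. (fabc a b c ^^ n) x0) \<longlonglongrightarrow> 0"
  apply (rule conv0[where q="a"])
  subgoal for x by (rule exI[of _ "a"]) (use assms in \<open>auto simp: fabc_g\<close>)
  using assms by auto

lemma part3b:
  assumes "c \<le> 1" "c > 1/2" "x0 \<in> {2/3..1}"
  shows "(\<lambda>n. (fabc a b c ^^ n) x0) \<longlonglongrightarrow> 1"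
  apply (rule conv1[where q="c"])
  subgoal for x by (rule exI[of _ "c"]) (use assms in \<open>auto simp: fabc_g\<close>)
  using assms by auto

lemma part6b:
  assumes "b \<le> 1" "c \<le> 1" "b > 1/2" "c > 1/2" "x0 \<in> {1/3<..1}"
  shows "(\<lambda>n. (fabc a b c ^^ n) x0) \<longlonglongrightarrow> 1"
  apply (rule conv1[where q="min b c"])
  subgoal for x by (rule exI[of _ "if x < 2/3 then b else c"]) (use assms in \<open>auto simp: fabc_g\<close>)
  using assms by auto

lemma part9:
  assumes "a \<le> 1" "b \<le> 1" "c \<le> 1" "a > 1/2" "b > 1/2" "c > 1/2" "x0 \<in> {0<..1}"
  shows "(\<lambda>n. (fabc a b c ^^ n) x0) \<longlonglongrightarrow> 1"
  apply (rule conv1[where q="min a (min b c)"])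
  subgoal for x by (rule exI[of _ "if x \<le> 1/3 then a else if x < 2/3 then b else c"]) (use assms in \<open>auto simp: fabc_g\<close>)
  using assms by auto

lemma inv5:
  assumes "0 \<le> b" "b \<le> 1" "0 \<le> c" "b > 1/2" "c < 1/2"
  shows "fabc a b c ` {4/9*(1+c)..4/9*(1+b)} \<subseteq> {4/9*(1+c)..4/9*(1+b)}"
proof
  fix y assume "y \<in> fabc a b c ` {4/9*(1+c)..4/9*(1+b)}"
  then obtain x where x: "x \<in> {4/9*(1+c)..4/9*(1+b)}" and y: "y = fabc a b c x" by blast
  show "y \<in> {4/9*(1+c)..4/9*(1+b)}"
  proof (cases "x < 2/3")
    case True
    have fx: "y = g b x" using True x assms y by (auto simp: fabc_g)
    have "x \<le> g b x" using x assms by (intro g_ge) auto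
    moreover have "g b x \<le> g b (2/3)" using x assms True by (intro g_mono) auto
    ultimately show ?thesis using fx x g_23[of b] by auto
  next
    case False
    have fx: "y = g c x" using False x assms y by (auto simp: fabc_g)
    have "g c x \<le> x" using x assms by (intro g_le) auto
    moreover have "g c (2/3) \<le> g c x" using x assms False by (intro g_mono) auto
    ultimately show ?thesis using fx x g_23[of c] by auto
  qed
qed

lemma esc5a:
  assumes "0 \<le> b" "b \<le> 1" "0 \<le> c" "b > 1/2" "c < 1/2" "x0 \<in> {1/3<..<4/9*(1+c)}"
  shows "\<exists>n0. \<forall>n>n0. (fabc a b c ^^ n) x0 \<in> {4/9*(1+c)..4/9*(1+b)}"
proof (rule escape[where S="{x0..<4/9*(1+c)}" and \<phi>="\<lambda>x. x" and e="(2*b-1)*x0*(1/3)" and M=1])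
  fix x assume x: "x \<in> {x0..<4/9*(1+c)}"
  have fx: "fabc a b c x = g b x" using x assms by (auto simp: fabc_g)
  have 1: "x + (2*b-1)*x0*(1/3) \<le> g b x" using x assms by (intro g_up) auto
  have 2: "g b x \<le> g b (2/3)" using x assms by (intro g_mono) auto
  have 3: "0 \<le> (2*b-1)*x0*(1/3)" using assms by auto
  show "fabc a b c x \<in> {x0..<4/9*(1+c)} \<union> {4/9*(1+c)..4/9*(1+b)}"
    using fx 1 2 3 x g_23[of b] by auto
  show "x + (2*b-1)*x0*(1/3) \<le> fabc a b c x" using fx 1 by simp
  show "x \<le> 1" using x assms by auto
qed (use assms inv5 in auto)

lemma esc5b:
  assumes "0 \<le> b" "b \<le> 1" "0 \<le> c" "b > 1/2" "c < 1/2" "x0 \<in> {4/9*(1+b)<..<1}"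
  shows "\<exists>n0. \<forall>n>n0. (fabc a b c ^^ n) x0 \<in> {4/9*(1+c)..4/9*(1+b)}"
proof (rule escape[where S="{4/9*(1+b)<..x0}" and \<phi>="\<lambda>x. -x" and e="(1-2*c)*(2/3)*(1-x0)" and M=0])
  fix x assume x: "x \<in> {4/9*(1+b)<..x0}"
  have fx: "fabc a b c x = g c x" using x assms by (auto simp: fabc_g)
  have 1: "g c x \<le> x - (1-2*c)*(2/3)*(1-x0)" using x assms by (intro g_down) auto
  have 2: "g c (2/3) \<le> g c x" using x assms by (intro g_mono) auto
  have 3: "0 \<le> (1-2*c)*(2/3)*(1-x0)" using assms by auto
  show "fabc a b c x \<in> {4/9*(1+b)<..x0} \<union> {4/9*(1+c)..4/9*(1+b)}"
    using fx 1 2 3 x g_23[of c] by auto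
  show "- x + (1-2*c)*(2/3)*(1-x0) \<le> - fabc a b c x" using fx 1 by simp
  show "- x \<le> 0" using x assms by auto
qed (use assms inv5 in auto)

lemma inv7:
  assumes "0 \<le> a" "a \<le> 1" "0 \<le> b" "a > 1/2" "b < 1/2"
  shows "fabc a b c ` {1/9*(1+4*b)..1/9*(1+4*a)} \<subseteq> {1/9*(1+4*b)..1/9*(1+4*a)}"
proof
  fix y assume "y \<in> fabc a b c ` {1/9*(1+4*b)..1/9*(1+4*a)}"
  then obtain x where x: "x \<in> {1/9*(1+4*b)..1/9*(1+4*a)}" and y: "y = fabc a b c x" by blast
  show "y \<in> {1/9*(1+4*b)..1/9*(1+4*a)}"
  proof (cases "x \<le> 1/3")
    case True
    have fx: "y = g a x" using True x assms y by (auto simp: fabc_g)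
    have "x \<le> g a x" using x assms by (intro g_ge) auto
    moreover have "g a x \<le> g a (1/3)" using x assms True by (intro g_mono) auto
    ultimately show ?thesis using fx x g_13[of a] by auto
  next
    case False
    have fx: "y = g b x" using False x assms y by (auto simp: fabc_g)
    have "g b x \<le> x" using x assms by (intro g_le) auto
    moreover have "g b (1/3) \<le> g b x" using x assms False by (intro g_mono) auto
    ultimately show ?thesis using fx x g_13[of b] by auto
  qed
qed

lemma esc7a:
  assumes "0 \<le> a" "a \<le> 1" "0 \<le> b" "a > 1/2" "b < 1/2" "x0 \<in> {0<..<1/9*(1+4*b)}"
  shows "\<exists>n0. \<forall>n>n0. (fabc a b c ^^ n) x0 \<in> {1/9*(1+4*b)..1/9*(1+4*a)}"
proof (rule escape[where S="{x0..<1/9*(1+4*b)}" and \<phi>="\<lambda>x. x" and e="(2*a-1)*x0*(2/3)" and M=1])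
  fix x assume x: "x \<in> {x0..<1/9*(1+4*b)}"
  have fx: "fabc a b c x = g a x" using x assms by (auto simp: fabc_g)
  have 1: "x + (2*a-1)*x0*(2/3) \<le> g a x" using x assms by (intro g_up) auto
  have 2: "g a x \<le> g a (1/3)" using x assms by (intro g_mono) auto
  have 3: "0 \<le> (2*a-1)*x0*(2/3)" using assms by auto
  have 4: "x \<le> g a x" using 1 3 by linarith
  show "fabc a b c x \<in> {x0..<1/9*(1+4*b)} \<union> {1/9*(1+4*b)..1/9*(1+4*a)}"
    using fx 4 2 x g_13[of a] by auto
  show "x + (2*a-1)*x0*(2/3) \<le> fabc a b c x" using fx 1 by simp
  show "x \<le> 1" using x assms by auto
qed (use assms inv7 in auto)

lemma esc7b:
  assumes "0 \<le> a" "a \<le> 1" "0 \<le> b" "0 \<le> c" "a > 1/2" "b < 1/2" "c < 1/2" "x0 \<in> {1/9*(1+4*a)<..<1}"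
  shows "\<exists>n0. \<forall>n>n0. (fabc a b c ^^ n) x0 \<in> {1/9*(1+4*b)..1/9*(1+4*a)}"
proof (rule escape[where S="{1/9*(1+4*a)<..x0}" and \<phi>="\<lambda>x. -x" and e="(1-2*max b c)*(1/3)*(1-x0)" and M=0])
  fix x assume x: "x \<in> {1/9*(1+4*a)<..x0}"
  define p where "p = (if x < 2/3 then b else c)"
  have fx: "fabc a b c x = g p x" using x assms unfolding p_def by (auto simp: fabc_g)
  have 1: "g p x \<le> x - (1-2*max b c)*(1/3)*(1-x0)" using x assms unfolding p_def by (intro g_down) auto
  have 2: "1/9*(1+4*b) \<le> g p x"
  proof (cases "x < 2/3")
    case True
    have "g b (1/3) \<le> g b x" using x assms True by (intro g_mono) auto
    then show ?thesis using True g_13[of b] unfolding p_def by simp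
  next
    case False
    have "g c (2/3) \<le> g c x" using x assms False by (intro g_mono) auto
    then show ?thesis using False g_23[of c] assms unfolding p_def by simp
  qed
  have 3: "0 \<le> (1-2*max b c)*(1/3)*(1-x0)" using assms by auto
  show "fabc a b c x \<in> {1/9*(1+4*a)<..x0} \<union> {1/9*(1+4*b)..1/9*(1+4*a)}"
    using fx 1 2 3 x by auto
  show "- x + (1-2*max b c)*(1/3)*(1-x0) \<le> - fabc a b c x" using fx 1 by simp
  show "- x \<le> 0" using x assms by auto
qed (use assms inv7 in auto)

lemma esc8b:
  assumes "0 \<le> a" "a \<le> 1" "0 \<le> b" "a > 1/2" "b < 1/2" "x0 \<in> {1/9*(1+4*a)<..<2/3}"
  shows "\<exists>n0. \<forall>n>n0. (fabc a b c ^^ n) x0 \<in> {1/9*(1+4*b)..1/9*(1+4*a)}"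
proof (rule escape[where S="{1/9*(1+4*a)<..x0}" and \<phi>="\<lambda>x. -x" and e="(1-2*b)*(1/3)*(1-x0)" and M=0])
  fix x assume x: "x \<in> {1/9*(1+4*a)<..x0}"
  have fx: "fabc a b c x = g b x" using x assms by (auto simp: fabc_g)
  have 1: "g b x \<le> x - (1-2*b)*(1/3)*(1-x0)" using x assms by (intro g_down) auto
  have 2: "g b (1/3) \<le> g b x" using x assms by (intro g_mono) auto
  have 3: "0 \<le> (1-2*b)*(1/3)*(1-x0)" using assms by auto
  show "fabc a b c x \<in> {1/9*(1+4*a)<..x0} \<union> {1/9*(1+4*b)..1/9*(1+4*a)}"
    using fx 1 2 3 x g_13[of b] by auto
  show "- x + (1-2*b)*(1/3)*(1-x0) \<le> - fabc a b c x" using fx 1 by simp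
  show "- x \<le> 0" using x assms by auto
qed (use assms inv7 in auto)

theorem theorem2p8:
  fixes a b c :: real
  assumes a01: "0 \<le> a" "a \<le> 1" and b01: "0 \<le> b" "b \<le> 1" and c01: "0 \<le> c" "c \<le> 1"
    and ne: "a \<noteq> 1/2" "b \<noteq> 1/2" "c \<noteq> 1/2"
  defines "f \<equiv> fabc a b c"
  shows
   "{x \<in> {0..1}. f x = x} = {0, 1}
    \<and> (a < 1/2 \<and> b < 1/2 \<and> c < 1/2 \<longrightarrow>
         (\<forall>x0 \<in> {0..<1}. (\<lambda>n. (f ^^ n) x0) \<longlonglongrightarrow> 0))
    \<and> (a < 1/2 \<and> b < 1/2 \<and> c > 1/2 \<longrightarrow>
         (\<forall>x0 \<in> {0..<2/3}. (\<lambda>n. (f ^^ n) x0) \<longlonglongrightarrow> 0)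
       \<and> (\<forall>x0 \<in> {2/3..1}. (\<lambda>n. (f ^^ n) x0) \<longlonglongrightarrow> 1))
    \<and> (a < 1/2 \<and> b > 1/2 \<and> c < 1/2 \<longrightarrow>
         (\<forall>x0 \<in> {0..1/3}. (\<lambda>n. (f ^^ n) x0) \<longlonglongrightarrow> 0))
    \<and> (a < 1/2 \<and> b > 1/2 \<and> c < 1/2 \<longrightarrow>
         (let A1 = {0..1/3::real};
              A2 = {1/3<..<4/9*(1+c)} \<union> {4/9*(1+b)<..<1};
              A3 = {4/9*(1+c)..4/9*(1+b)}
          in (\<forall>x0 \<in> A1. (\<lambda>n. (f ^^ n) x0) \<longlonglongrightarrow> 0)
           \<and> (\<forall>x0 \<in> A2. \<exists>n0::nat. \<forall>n > n0. (f ^^ n) x0 \<in> A3)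
           \<and> f ` A3 \<subseteq> A3))
    \<and> (a < 1/2 \<and> b > 1/2 \<and> c > 1/2 \<longrightarrow>
         (\<forall>x0 \<in> {0..1/3}. (\<lambda>n. (f ^^ n) x0) \<longlonglongrightarrow> 0)
       \<and> (\<forall>x0 \<in> {1/3<..1}. (\<lambda>n. (f ^^ n) x0) \<longlonglongrightarrow> 1))
    \<and> (a > 1/2 \<and> b < 1/2 \<and> c < 1/2 \<longrightarrow>
         (let B1 = {0<..<1/9*(1+4*b)} \<union> {1/9*(1+4*a)<..<1::real};
              B2 = {1/9*(1+4*b)..1/9*(1+4*a)}
          in (\<forall>x0 \<in> B1. \<exists>n0::nat. \<forall>n > n0. (f ^^ n) x0 \<in> B2)
           \<and> f ` B2 \<subseteq> B2))
    \<and> (a > 1/2 \<and> b < 1/2 \<and> c > 1/2 \<longrightarrow>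
         (let C1 = {0<..<1/9*(1+4*b)} \<union> {1/9*(1+4*a)<..<2/3::real};
              C2 = {1/9*(1+4*b)..1/9*(1+4*a)};
              C3 = {2/3..1::real}
          in (\<forall>x0 \<in> C1. \<exists>n0::nat. \<forall>n > n0. (f ^^ n) x0 \<in> C2)
           \<and> f ` C2 \<subseteq> C2
           \<and> (\<forall>x0 \<in> C3. (\<lambda>n. (f ^^ n) x0) \<longlonglongrightarrow> 1)))
    \<and> (a > 1/2 \<and> b > 1/2 \<and> c > 1/2 \<longrightarrow>
         (\<forall>x0 \<in> {0<..1}. (\<lambda>n. (f ^^ n) x0) \<longlonglongrightarrow> 1))"
proof -
  note A = a01 b01 c01 ne
  have P1: "{x \<in> {0..1}. f x = x} = {0, 1}" unfolding f_def using fix_pts ne by blast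
  have P2: "a < 1/2 \<and> b < 1/2 \<and> c < 1/2 \<longrightarrow>
         (\<forall>x0 \<in> {0..<1}. (\<lambda>n. (f ^^ n) x0) \<longlonglongrightarrow> 0)"
    unfolding f_def using A part2 by blast
  have P3: "a < 1/2 \<and> b < 1/2 \<and> c > 1/2 \<longrightarrow>
         (\<forall>x0 \<in> {0..<2/3}. (\<lambda>n. (f ^^ n) x0) \<longlonglongrightarrow> 0)
       \<and> (\<forall>x0 \<in> {2/3..1}. (\<lambda>n. (f ^^ n) x0) \<longlonglongrightarrow> 1)"
    unfolding f_def using A part3a part3b by blast
  have P4: "a < 1/2 \<longrightarrow> (\<forall>x0 \<in> {0..1/3}. (\<lambda>n. (f ^^ n) x0) \<longlonglongrightarrow> 0)"
    unfolding f_def using A part4 by blast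
  have P5: "a < 1/2 \<and> b > 1/2 \<and> c < 1/2 \<longrightarrow>
         (let A1 = {0..1/3::real};
              A2 = {1/3<..<4/9*(1+c)} \<union> {4/9*(1+b)<..<1};
              A3 = {4/9*(1+c)..4/9*(1+b)}
          in (\<forall>x0 \<in> A1. (\<lambda>n. (f ^^ n) x0) \<longlonglongrightarrow> 0)
           \<and> (\<forall>x0 \<in> A2. \<exists>n0::nat. \<forall>n > n0. (f ^^ n) x0 \<in> A3)
           \<and> f ` A3 \<subseteq> A3)"
  proof
    assume h: "a < 1/2 \<and> b > 1/2 \<and> c < 1/2"
    have "\<forall>x0 \<in> {1/3<..<4/9*(1+c)} \<union> {4/9*(1+b)<..<1}. \<exists>n0::nat. \<forall>n > n0. (f ^^ n) x0 \<in> {4/9*(1+c)..4/9*(1+b)}"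
    proof
      fix x0 assume "x0 \<in> {1/3<..<4/9*(1+c)} \<union> {4/9*(1+b)<..<1}"
      then show "\<exists>n0::nat. \<forall>n > n0. (f ^^ n) x0 \<in> {4/9*(1+c)..4/9*(1+b)}"
        unfolding f_def using esc5a[of b c x0 a] esc5b[of b c x0 a] A h by blast
    qed
    moreover have "f ` {4/9*(1+c)..4/9*(1+b)} \<subseteq> {4/9*(1+c)..4/9*(1+b)}"
      unfolding f_def using inv5[of b c a] A h by blast
    ultimately show "let A1 = {0..1/3::real};
              A2 = {1/3<..<4/9*(1+c)} \<union> {4/9*(1+b)<..<1};
              A3 = {4/9*(1+c)..4/9*(1+b)}
          in (\<forall>x0 \<in> A1. (\<lambda>n. (f ^^ n) x0) \<longlonglongrightarrow> 0)
           \<and> (\<forall>x0 \<in> A2. \<exists>n0::nat. \<forall>n > n0. (f ^^ n) x0 \<in> A3)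
           \<and> f ` A3 \<subseteq> A3" using P4 h unfolding Let_def by blast
  qed
  have P6: "a < 1/2 \<and> b > 1/2 \<and> c > 1/2 \<longrightarrow>
         (\<forall>x0 \<in> {0..1/3}. (\<lambda>n. (f ^^ n) x0) \<longlonglongrightarrow> 0)
       \<and> (\<forall>x0 \<in> {1/3<..1}. (\<lambda>n. (f ^^ n) x0) \<longlonglongrightarrow> 1)"
    using P4 part6b A unfolding f_def by blast
  have P7: "a > 1/2 \<and> b < 1/2 \<and> c < 1/2 \<longrightarrow>
         (let B1 = {0<..<1/9*(1+4*b)} \<union> {1/9*(1+4*a)<..<1::real};
              B2 = {1/9*(1+4*b)..1/9*(1+4*a)}
          in (\<forall>x0 \<in> B1. \<exists>n0::nat. \<forall>n > n0. (f ^^ n) x0 \<in> B2)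
           \<and> f ` B2 \<subseteq> B2)"
  proof
    assume h: "a > 1/2 \<and> b < 1/2 \<and> c < 1/2"
    have "\<forall>x0 \<in> {0<..<1/9*(1+4*b)} \<union> {1/9*(1+4*a)<..<1::real}. \<exists>n0::nat. \<forall>n > n0. (f ^^ n) x0 \<in> {1/9*(1+4*b)..1/9*(1+4*a)}"
    proof
      fix x0 assume "x0 \<in> {0<..<1/9*(1+4*b)} \<union> {1/9*(1+4*a)<..<1::real}"
      then show "\<exists>n0::nat. \<forall>n > n0. (f ^^ n) x0 \<in> {1/9*(1+4*b)..1/9*(1+4*a)}"
        unfolding f_def using esc7a[of a b x0 c] esc7b[of a b c x0] A h by blast
    qed
    moreover have "f ` {1/9*(1+4*b)..1/9*(1+4*a)} \<subseteq> {1/9*(1+4*b)..1/9*(1+4*a)}"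
      unfolding f_def using inv7[of a b c] A h by blast
    ultimately show "let B1 = {0<..<1/9*(1+4*b)} \<union> {1/9*(1+4*a)<..<1::real};
              B2 = {1/9*(1+4*b)..1/9*(1+4*a)}
          in (\<forall>x0 \<in> B1. \<exists>n0::nat. \<forall>n > n0. (f ^^ n) x0 \<in> B2)
           \<and> f ` B2 \<subseteq> B2" unfolding Let_def by blast
  qed
  have P8: "a > 1/2 \<and> b < 1/2 \<and> c > 1/2 \<longrightarrow>
         (let C1 = {0<..<1/9*(1+4*b)} \<union> {1/9*(1+4*a)<..<2/3::real};
              C2 = {1/9*(1+4*b)..1/9*(1+4*a)};
              C3 = {2/3..1::real}
          in (\<forall>x0 \<in> C1. \<exists>n0::nat. \<forall>n > n0. (f ^^ n) x0 \<in> C2)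
           \<and> f ` C2 \<subseteq> C2
           \<and> (\<forall>x0 \<in> C3. (\<lambda>n. (f ^^ n) x0) \<longlonglongrightarrow> 1))"
  proof
    assume h: "a > 1/2 \<and> b < 1/2 \<and> c > 1/2"
    have "\<forall>x0 \<in> {0<..<1/9*(1+4*b)} \<union> {1/9*(1+4*a)<..<2/3::real}. \<exists>n0::nat. \<forall>n > n0. (f ^^ n) x0 \<in> {1/9*(1+4*b)..1/9*(1+4*a)}"
    proof
      fix x0 assume "x0 \<in> {0<..<1/9*(1+4*b)} \<union> {1/9*(1+4*a)<..<2/3::real}"
      then show "\<exists>n0::nat. \<forall>n > n0. (f ^^ n) x0 \<in> {1/9*(1+4*b)..1/9*(1+4*a)}"
        unfolding f_def using esc7a[of a b x0 c] esc8b[of a b x0 c] A h by blast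
    qed
    moreover have "f ` {1/9*(1+4*b)..1/9*(1+4*a)} \<subseteq> {1/9*(1+4*b)..1/9*(1+4*a)}"
      unfolding f_def using inv7[of a b c] A h by blast
    moreover have "\<forall>x0 \<in> {2/3..1::real}. (\<lambda>n. (f ^^ n) x0) \<longlonglongrightarrow> 1"
      unfolding f_def using part3b A h by blast
    ultimately show "let C1 = {0<..<1/9*(1+4*b)} \<union> {1/9*(1+4*a)<..<2/3::real};
              C2 = {1/9*(1+4*b)..1/9*(1+4*a)};
              C3 = {2/3..1::real}
          in (\<forall>x0 \<in> C1. \<exists>n0::nat. \<forall>n > n0. (f ^^ n) x0 \<in> C2)
           \<and> f ` C2 \<subseteq> C2
           \<and> (\<forall>x0 \<in> C3. (\<lambda>n. (f ^^ n) x0) \<longlonglongrightarrow> 1)" unfolding Let_def by blast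
  qed
  have P9: "a > 1/2 \<and> b > 1/2 \<and> c > 1/2 \<longrightarrow>
         (\<forall>x0 \<in> {0<..1}. (\<lambda>n. (f ^^ n) x0) \<longlonglongrightarrow> 1)"
    unfolding f_def using A part9 by blast
  show ?thesis using P1 P2 P3 P4 P5 P6 P7 P8 P9 by blast
qed

end
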